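(* Let $G,H$ be real Hilbert spaces, let $D\subset G$ be bounded, let $x\in D$, and let $K_F,L_F,\lambda_F,L_f,\lambda_f,K_f\ge0$ be constants with $\lambda_F\le K_F^2$ and $\lambda_f\le L_f$. Let $F:G\to H$ be $K_F$-BJ, $L_F$-LJ and $\lambda_F$-UC on $D$, let $f:H\to\mathbb{R}$ be $L_f$-LG and $\lambda_f$-PL on $F(D)$, and suppose $\|\nabla f(F(x))\|\le K_f$. Let $L=K_F^2L_f+K_fL_F$, $\lambda=\lambda_F\lambda_f$, $\alpha\in(0,\tfrac2L)$, $q=1+L\alpha^2\lambda-2\alpha\lambda$, and $x^\alpha=x-\alpha\nabla(f\circ F)(x)$. If $[x,x^\alpha]\subset D$, then \[ (f\circ F)(x^\alpha)-f_*\le q\bigl((f\circ F)(x)-f_*\bigr), \] where $f_*=\inf_{h\in H}f(h)$.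
   Context: For $F:G\to H$ between Hilbert spaces, $\partial F(x)$ is the Fréchet derivative and $\partial F(x)^*$ its adjoint; $\nabla f$ denotes gradients of real-valued functions; $[x,y]=\{(1-t)x+ty:t\in[0,1]\}$. For $F$ differentiable on $D$: $K$-BJ on $D$ means $\|\partial F(x)\|\le K$ for $x\in D$; $L$-LJ on $D$ means $\|\partial F(x)-\partial F(y)\|\le L\|x-y\|$ for $x,y\in D$; $\lambda$-UC on $D$ ($\lambda>0$) means $\langle y,\partial F(x)\partial F(x)^*y\rangle\ge\lambda\|y\|^2$ for all $y\in H$, $x\in D$. For $f:H\to\mathbb{R}$ differentiable on $E$: $L$-LG on $E$ means $\|\nabla f(u)-\nabla f(v)\|\le L\|u-v\|$ for $u,v\in E$; if $f$ is bounded below on $H$ with $f_*=\inf_Hf\in\mathbb{R}$, $\lambda$-PL on $E$ ($\lambda>0$) means $\tfrac12\|\nabla f(u)\|^2\ge\lambda(f(u)-f_* )$ for $u\in E$. *)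

theory Defs
  imports "HOL-Analysis.Analysis"
begin

definition BJ :: "real \<Rightarrow> ('a::real_normed_vector \<Rightarrow> 'a \<Rightarrow> 'b::real_normed_vector) \<Rightarrow> 'a set \<Rightarrow> bool" where
  "BJ K DF D \<longleftrightarrow> (\<forall>x\<in>D. onorm (DF x) \<le> K)"

definition LJ :: "real \<Rightarrow> ('a::real_normed_vector \<Rightarrow> 'a \<Rightarrow> 'b::real_normed_vector) \<Rightarrow> 'a set \<Rightarrow> bool" where
  "LJ L DF D \<longleftrightarrow> (\<forall>x\<in>D. \<forall>y\<in>D. onorm (\<lambda>h. DF x h - DF y h) \<le> L * norm (x - y))"

text \<open>lambda-UC: uniform conditioning; DFs x is the adjoint of DF x.\<close>
definition UC :: "real \<Rightarrow> ('a::real_inner \<Rightarrow> 'a \<Rightarrow> 'b::real_inner) \<Rightarrow> ('a \<Rightarrow> 'b \<Rightarrow> 'a) \<Rightarrow> 'a set \<Rightarrow> bool" where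
  "UC lam DF DFs D \<longleftrightarrow> lam > 0 \<and> (\<forall>x\<in>D. \<forall>y. inner y (DF x (DFs x y)) \<ge> lam * (norm y)\<^sup>2)"

definition LG :: "real \<Rightarrow> ('b::real_normed_vector \<Rightarrow> 'b) \<Rightarrow> 'b set \<Rightarrow> bool" where
  "LG L gf E \<longleftrightarrow> (\<forall>u\<in>E. \<forall>v\<in>E. norm (gf u - gf v) \<le> L * norm (u - v))"

definition PL :: "real \<Rightarrow> ('b::real_normed_vector \<Rightarrow> real) \<Rightarrow> ('b \<Rightarrow> 'b) \<Rightarrow> 'b set \<Rightarrow> bool" where
  "PL lam f gf E \<longleftrightarrow> lam > 0 \<and> (\<forall>u\<in>E. (1/2) * (norm (gf u))\<^sup>2 \<ge> lam * (f u - Inf (range f)))"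

end

theory Submission
  imports Defs
begin

theorem proposition10:
  fixes F :: "'g::{real_inner,complete_space} \<Rightarrow> 'h::{real_inner,complete_space}"
    and DF :: "'g \<Rightarrow> 'g \<Rightarrow> 'h" and DFs :: "'g \<Rightarrow> 'h \<Rightarrow> 'g"
    and f :: "'h \<Rightarrow> real" and gf :: "'h \<Rightarrow> 'h" and gfF :: "'g"
    and D :: "'g set" and x :: 'g
    and KF LF lamF Lf lamf Kf \<alpha> :: real
  assumes "bounded D" and "x \<in> D"
    and "KF \<ge> 0" "LF \<ge> 0" "lamF \<ge> 0" "Lf \<ge> 0" "lamf \<ge> 0" "Kf \<ge> 0"
    and "lamF \<le> KF\<^sup>2" and "lamf \<le> Lf"
    and F_deriv: "\<forall>y\<in>D. (F has_derivative DF y) (at y)"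
    and adjoint: "\<forall>y\<in>D. \<forall>u v. inner (DF y u) v = inner u (DFs y v)"
    and "BJ KF DF D" and "LJ LF DF D" and "UC lamF DF DFs D"
    and f_grad: "\<forall>u\<in>F ` D. GDERIV f u :> gf u"
    and "bdd_below (range f)"
    and "LG Lf gf (F ` D)" and "PL lamf f gf (F ` D)"
    and "norm (gf (F x)) \<le> Kf"
    and comp_grad: "GDERIV (f \<circ> F) x :> gfF"
    and "0 < \<alpha>" and "\<alpha> < 2 / (KF\<^sup>2 * Lf + Kf * LF)"
    and "closed_segment x (x - \<alpha> *\<^sub>R gfF) \<subseteq> D"
  shows "(f \<circ> F) (x - \<alpha> *\<^sub>R gfF) - Inf (range f)
           \<le> (1 + (KF\<^sup>2 * Lf + Kf * LF) * \<alpha>\<^sup>2 * (lamF * lamf) - 2 * \<alpha> * (lamF * lamf))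
              * ((f \<circ> F) x - Inf (range f))"
proof -
  let ?L = "KF\<^sup>2 * Lf + Kf * LF"
  let ?fs = "Inf (range f)"
  define g where "g = gfF"
  define y where "y = x - \<alpha> *\<^sub>R g"
  define d where "d = y - x"
  define gx where "gx = gf (F x)"
  have segD: "closed_segment x y \<subseteq> D" using assms(24) by (simp add: y_def g_def)
  have zD: "x + t *\<^sub>R d \<in> D" if "0 \<le> t" "t \<le> 1" for t
  proof -
    have "x + t *\<^sub>R d = (1 - t) *\<^sub>R x + t *\<^sub>R y" by (simp add: d_def algebra_simps)
    then have "x + t *\<^sub>R d \<in> closed_segment x y" using that by (auto simp: in_segment)
    then show ?thesis using segD by blast
  qed
  have bl: "bounded_linear (DF z)" if "z \<in> D" for z
    using F_deriv that has_derivative_bounded_linear by blast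
  have fder: "(f has_derivative (\<lambda>h. inner h (gf (F z)))) (at (F z))" if "z \<in> D" for z
    using f_grad that by (simp add: gderiv_def)
  have compder: "((f \<circ> F) has_derivative (\<lambda>h. inner (DF z h) (gf (F z)))) (at z)" if "z \<in> D" for z
  proof -
    have "((\<lambda>h. inner h (gf (F z))) \<circ> DF z) = (\<lambda>h. inner (DF z h) (gf (F z)))" by auto
    then show ?thesis using diff_chain_at[OF F_deriv[rule_format, OF that] fder[OF that]] by simp
  qed
  have gform: "inner h g = inner (DF x h) gx" for h
  proof -
    have "(\<lambda>h. inner h g) = (\<lambda>h. inner (DF x h) (gf (F x)))"
      using has_derivative_unique[OF comp_grad[unfolded gderiv_def] compder[OF assms(2)]]
      by (simp add: g_def)
    then show ?thesis unfolding gx_def by metis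
  qed
  have gDFs: "g = DFs x gx"
  proof -
    have "inner h (g - DFs x gx) = 0" for h
      using gform adjoint assms(2) by (simp add: inner_diff_right)
    then have "inner (g - DFs x gx) (g - DFs x gx) = 0" by blast
    then show ?thesis by simp
  qed
  have BJ: "onorm (DF z) \<le> KF" if "z \<in> D" for z using assms(13) that by (simp add: BJ_def)
  have LJ: "onorm (\<lambda>h. DF z h - DF w h) \<le> LF * norm (z - w)" if "z \<in> D" "w \<in> D" for z w
    using assms(14) that by (simp add: LJ_def)
  have LG: "norm (gf u - gf v) \<le> Lf * norm (u - v)" if "u \<in> F ` D" "v \<in> F ` D" for u v
    using assms(18) that unfolding LG_def by blast
  have Flip: "norm (F z - F x) \<le> KF * norm (z - x)" if "z \<in> D" "closed_segment x z \<subseteq> D" for z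
  proof -
    have "norm (F z - F x) \<le> KF * norm (z - x)"
      apply (rule differentiable_bound[where S="closed_segment x z" and f'=DF])
      using that F_deriv BJ by (auto intro: has_derivative_at_withinI)
    then show ?thesis .
  qed
  define \<psi> where "\<psi> t = (f \<circ> F) (x + t *\<^sub>R d) - (f \<circ> F) x - t * inner g d - ?L / 2 * t\<^sup>2 * (norm d)\<^sup>2" for t
  have psider: "\<exists>D'. DERIV \<psi> t :> D' \<and> D' \<le> 0" if t: "0 \<le> t" "t \<le> 1" for t
  proof -
    define z where "z = x + t *\<^sub>R d"
    have z: "z \<in> D" using zD t by (simp add: z_def)
    have lin: "((\<lambda>s. x + s *\<^sub>R d) has_derivative (\<lambda>s. s *\<^sub>R d)) (at t)"
      by (auto intro!: derivative_eq_intros)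
    have c1: "((\<lambda>s. (f \<circ> F) (x + s *\<^sub>R d)) has_derivative (\<lambda>s. inner (DF z (s *\<^sub>R d)) (gf (F z)))) (at t)"
      using diff_chain_at[OF lin, of "f \<circ> F" "\<lambda>h. inner (DF z h) (gf (F z))"] compder[OF z]
      by (simp add: z_def o_def)
    have eq: "(\<lambda>s. inner (DF z (s *\<^sub>R d)) (gf (F z))) = (\<lambda>s. inner (DF z d) (gf (F z)) * s)"
      using linear_scale[OF bounded_linear.linear[OF bl[OF z]]] by auto
    have c2: "((\<lambda>s. (f \<circ> F) (x + s *\<^sub>R d)) has_real_derivative inner (DF z d) (gf (F z))) (at t)"
      using c1 unfolding eq has_field_derivative_def by simp
    define D' where "D' = inner (DF z d) (gf (F z)) - inner g d - ?L * t * (norm d)\<^sup>2"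
    have "DERIV \<psi> t :> D'"
      unfolding \<psi>_def[abs_def] D'_def
      by (rule derivative_eq_intros c2 | simp)+
    moreover have "D' \<le> 0"
    proof -
      have segz: "closed_segment x z \<subseteq> D"
      proof -
        have "z \<in> closed_segment x y"
          using t by (auto simp: in_segment z_def d_def algebra_simps intro!: exI[of _ t])
        then show ?thesis using segD closed_segment_subset[of x "closed_segment x y" z] by auto
      qed
      have nzx: "norm (z - x) = t * norm d" using t by (simp add: z_def)
      have "D' + ?L * t * (norm d)\<^sup>2 = inner (DF z d) (gf (F z)) - inner (DF x d) gx"
        using gform[of d] by (simp add: D'_def inner_commute)
      also have "\<dots> = inner (DF z d) (gf (F z) - gx) + inner (DF z d - DF x d) gx"
        by (simp add: inner_diff_right inner_diff_left)
      also have "\<dots> \<le> norm (DF z d) * norm (gf (F z) - gx) + norm (DF z d - DF x d) * norm gx"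
        by (intro add_mono norm_cauchy_schwarz)
      also have "\<dots> \<le> (KF * norm d) * (Lf * (KF * (t * norm d))) + (LF * (t * norm d) * norm d) * Kf"
      proof (intro add_mono mult_mono)
        show "norm (DF z d) \<le> KF * norm d"
          using onorm[OF bl[OF z], of d] BJ[OF z] by (meson mult_right_mono norm_ge_zero order_trans)
        have "norm (gf (F z) - gx) \<le> Lf * norm (F z - F x)"
          unfolding gx_def using LG z assms(2) by blast
        also have "\<dots> \<le> Lf * (KF * (t * norm d))"
          using Flip[OF z segz] nzx assms(6) by (simp add: mult_left_mono)
        finally show "norm (gf (F z) - gx) \<le> Lf * (KF * (t * norm d))" .
        have blz: "bounded_linear (\<lambda>h. DF z h - DF x h)"
          using bl[OF z] bl[OF assms(2)] by (rule bounded_linear_sub)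
        show "norm (DF z d - DF x d) \<le> LF * (t * norm d) * norm d"
          using onorm[OF blz, of d] LJ[OF z assms(2)] nzx
          by (metis (no_types, lifting) mult_right_mono norm_ge_zero order_trans)
        show "norm gx \<le> Kf" using assms(20) by (simp add: gx_def)
      qed (use assms t in auto)
      also have "\<dots> = ?L * t * (norm d)\<^sup>2" by (simp add: power2_eq_square algebra_simps)
      finally show ?thesis by simp
    qed
    ultimately show ?thesis by blast
  qed
  have "\<psi> 1 \<le> \<psi> 0"
    using DERIV_nonpos_imp_nonincreasing[of 0 1 \<psi>] psider by auto
  then have desc: "(f \<circ> F) y \<le> (f \<circ> F) x + inner g d + ?L / 2 * (norm d)\<^sup>2"
    by (simp add: \<psi>_def d_def)
  have dg: "d = - \<alpha> *\<^sub>R g" by (simp add: d_def y_def)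
  have desc2: "(f \<circ> F) y \<le> (f \<circ> F) x - \<alpha> * (1 - ?L * \<alpha> / 2) * (norm g)\<^sup>2"
  proof -
    have i1: "inner g d = - \<alpha> * (norm g)\<^sup>2" unfolding dg by (simp add: power2_norm_eq_inner)
    have i2: "(norm d)\<^sup>2 = \<alpha>\<^sup>2 * (norm g)\<^sup>2" unfolding dg using assms(22) by (simp add: power_mult_distrib)
    show ?thesis using desc unfolding i1 i2 by (simp add: algebra_simps power2_eq_square)
  qed
  have lamF: "lamF > 0" and UC: "inner v (DF x (DFs x v)) \<ge> lamF * (norm v)\<^sup>2" for v
    using assms(15) assms(2) by (auto simp: UC_def)
  have lamf: "lamf > 0" and PL: "(1/2) * (norm gx)\<^sup>2 \<ge> lamf * (f (F x) - ?fs)"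
    using assms(19) assms(2) by (auto simp: PL_def gx_def)
  have "(norm g)\<^sup>2 = inner (DF x (DFs x gx)) gx"
    using adjoint assms(2) by (simp add: gDFs dot_square_norm[symmetric])
  also have "\<dots> \<ge> lamF * (norm gx)\<^sup>2" using UC[of gx] by (simp add: inner_commute)
  finally have g2: "(norm g)\<^sup>2 \<ge> lamF * (norm gx)\<^sup>2" .
  define E where "E = f (F x) - ?fs"
  have E0: "E \<ge> 0" unfolding E_def using cInf_lower[OF _ assms(17), of "f (F x)"] by auto
  have gE: "(norm g)\<^sup>2 \<ge> 2 * (lamF * lamf) * E"
  proof -
    have "2 * (lamF * lamf) * E = lamF * (2 * (lamf * E))" by simp
    also have "\<dots> \<le> lamF * (norm gx)\<^sup>2" using PL lamF unfolding E_def by (intro mult_left_mono) auto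
    finally show ?thesis using g2 by linarith
  qed
  have Lpos: "?L > 0"
  proof (rule ccontr)
    assume "\<not> ?L > 0"
    then have "2 / ?L \<le> 0" by (simp add: divide_nonpos_pos divide_nonneg_neg le_less not_less)
    then show False using assms(22,23) by linarith
  qed
  have La: "?L * \<alpha> < 2" using assms(23) Lpos by (simp add: field_simps)
  have c0: "\<alpha> * (1 - ?L * \<alpha> / 2) \<ge> 0" using La assms(22) by simp
  have "(f \<circ> F) y - ?fs \<le> E - \<alpha> * (1 - ?L * \<alpha> / 2) * (norm g)\<^sup>2"
    using desc2 by (simp add: E_def)
  also have "\<dots> \<le> E - \<alpha> * (1 - ?L * \<alpha> / 2) * (2 * (lamF * lamf) * E)"
    using mult_left_mono[OF gE c0] by linarith
  also have "\<dots> = (1 + ?L * \<alpha>\<^sup>2 * (lamF * lamf) - 2 * \<alpha> * (lamF * lamf)) * E"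
    by (simp add: power2_eq_square algebra_simps)
  finally show ?thesis by (simp add: y_def g_def E_def)
qed

end
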